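(* Let $a_1<a_2<\dots<a_n$ be positive integers with $a_i\le 2i-1$ for all $i$. Then $$\sum_{k=1}^{n}\det_{1\le i,j\le n}\left[\frac{1}{(a_i-j)!}\cdot\begin{cases}1 & i\ne k\\ (a_i-j)(a_i-j-1) & i=k\end{cases}\right]=\left(\sum_{k=1}^n (a_k-k)(a_k-2n+k-1)\right)\det_{1\le i,j\le n}\left[\frac{1}{(a_i-j)!}\right].$$
   Context: Convention: $1/m!=0$ for negative integers $m$ (so the corresponding matrix entries vanish). *)

theory Defs
  imports "Jordan_Normal_Form.Determinant"
begin

definition inv_fact :: "int \<Rightarrow> real" where
  "inv_fact m = (if m < 0 then 0 else 1 / fact (nat m))"

end

theory Submission
  imports Defs
begin

definition QQ :: "nat \<Rightarrow> (nat \<Rightarrow> nat \<Rightarrow> real) \<Rightarrow> (nat \<Rightarrow> nat) \<Rightarrow> nat \<Rightarrow> real" where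
  "QQ n A p k = (\<Prod>i\<in>{0..<n}-{k}. A i (p i))"

definition RR :: "nat \<Rightarrow> (nat \<Rightarrow> nat \<Rightarrow> real) \<Rightarrow> (nat \<Rightarrow> nat \<Rightarrow> real) \<Rightarrow> real" where
  "RR n A b = (\<Sum>p\<in>{p. p permutes {0..<n}}. signof p * (\<Sum>k=0..<n. b k (p k) * QQ n A p k))"

lemma prod_if_k:
  assumes "k < (n::nat)"
  shows "(\<Prod>i=0..<n. if i = k then x i else y i) = (x k :: real) * (\<Prod>i\<in>{0..<n}-{k}. y i)"
proof -
  have "(\<Prod>i=0..<n. if i = k then x i else y i) = (if k = k then x k else y k) * (\<Prod>i\<in>{0..<n}-{k}. if i = k then x i else y i)"
    using assms by (subst prod.remove[of _ k]) auto
  also have "(\<Prod>i\<in>{0..<n}-{k}. if i = k then x i else y i) = (\<Prod>i\<in>{0..<n}-{k}. y i)"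
    by (rule prod.cong) auto
  finally show ?thesis by simp
qed

lemma det_plain:
  "det (mat n n (\<lambda>(i,j). A i j)) = (\<Sum>p\<in>{p. p permutes {0..<n}}. signof p * (\<Prod>i=0..<n. A i (p i)))"
  apply (subst det_def'[of _ n], simp)
  apply (rule sum.cong, simp)
  apply (simp add: permutes_in_image)
  done

lemma det_rrep:
  assumes "k < n"
  shows "det (mat n n (\<lambda>(i,j). if i = k then b i j else A i j)) =
    (\<Sum>p\<in>{p. p permutes {0..<n}}. signof p * (b k (p k) * QQ n A p k))"
  apply (subst det_def'[of _ n], simp)
  apply (rule sum.cong, simp)
  apply (simp add: permutes_in_image)
  apply (subst prod_if_k[OF assms, of "\<lambda>i. b i (_ i)" "\<lambda>i. A i (_ i)"])
  apply (simp add: QQ_def)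
  done

lemma det_crep:
  assumes "j < n"
  shows "det (mat n n (\<lambda>(i,j'). if j' = j then b i j' else A i j')) =
    (\<Sum>p\<in>{p. p permutes {0..<n}}. signof p * (b (inv_into UNIV p j) j * QQ n A p (inv_into UNIV p j)))"
  apply (subst det_def'[of _ n], simp)
  apply (rule sum.cong, simp)
proof -
  fix p assume p: "p \<in> {p. p permutes {0..<n}}"
  hence pp: "p permutes {0..<n}" by simp
  have ik: "inv_into UNIV p j < n" using pp assms by (simp add: permutes_in_image permutes_inv)
  have pinv: "p (inv_into UNIV p j) = j" using pp by (meson permutes_inverses(1))
  have eq: "\<And>i. (p i = j) = (i = inv_into UNIV p j)" using pp
    by (metis permutes_inverses(1) permutes_inverses(2))
  have "(\<Prod>i = 0..<n. mat n n (\<lambda>(i, j'). if j' = j then b i j' else A i j') $$ (i, p i))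
     = (\<Prod>i = 0..<n. if i = inv_into UNIV p j then b i (p i) else A i (p i))"
    apply (rule prod.cong, simp)
    using pp by (simp add: permutes_in_image eq)
  also have "\<dots> = b (inv_into UNIV p j) j * QQ n A p (inv_into UNIV p j)"
    by (subst prod_if_k[OF ik]) (simp add: QQ_def pinv)
  finally show "signof p * (\<Prod>i = 0..<n. mat n n (\<lambda>(i, j'). if j' = j then b i j' else A i j') $$ (i, p i)) =
         signof p * (b (inv_into UNIV p j) j * QQ n A p (inv_into UNIV p j))" by simp
qed

lemma RR_swap:
  "RR n A b = (\<Sum>j=0..<n. \<Sum>p\<in>{p. p permutes {0..<n}}. signof p * (b (inv_into UNIV p j) j * QQ n A p (inv_into UNIV p j)))"
proof -
  have "\<And>p. p permutes {0..<n} \<Longrightarrow> (\<Sum>k=0..<n. b k (p k) * QQ n A p k) = (\<Sum>j=0..<n. b (inv_into UNIV p j) j * QQ n A p (inv_into UNIV p j))"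
  proof -
    fix p assume pp: "p permutes {0..<n}"
    have "(\<Sum>j=0..<n. b (inv_into UNIV p j) j * QQ n A p (inv_into UNIV p j)) = (\<Sum>k=0..<n. b (inv_into UNIV p (p k)) (p k) * QQ n A p (inv_into UNIV p (p k)))"
      by (rule sum.reindex_bij_betw[symmetric]) (rule permutes_imp_bij[OF pp])
    also have "\<dots> = (\<Sum>k=0..<n. b k (p k) * QQ n A p k)"
      using pp by (simp add: permutes_inverses(2))
    finally show "(\<Sum>k=0..<n. b k (p k) * QQ n A p k) = (\<Sum>j=0..<n. b (inv_into UNIV p j) j * QQ n A p (inv_into UNIV p j))" by simp
  qed
  hence "RR n A b = (\<Sum>p\<in>{p. p permutes {0..<n}}. \<Sum>j=0..<n. signof p * (b (inv_into UNIV p j) j * QQ n A p (inv_into UNIV p j)))"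
    unfolding RR_def by (simp add: sum_distrib_left)
  also have "\<dots> = (\<Sum>j=0..<n. \<Sum>p\<in>{p. p permutes {0..<n}}. signof p * (b (inv_into UNIV p j) j * QQ n A p (inv_into UNIV p j)))"
    by (rule sum.swap)
  finally show ?thesis .
qed

lemma RR_rows:
  "(\<Sum>k=0..<n. det (mat n n (\<lambda>(i,j). if i = k then b i j else A i j))) = RR n A b"
proof -
  have "(\<Sum>k=0..<n. det (mat n n (\<lambda>(i,j). if i = k then b i j else A i j)))
     = (\<Sum>k=0..<n. \<Sum>p\<in>{p. p permutes {0..<n}}. signof p * (b k (p k) * QQ n A p k))"
    by (rule sum.cong) (auto simp: det_rrep)
  also have "\<dots> = RR n A b" unfolding RR_def
    by (subst sum.swap) (simp add: sum_distrib_left)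
  finally show ?thesis .
qed

lemma RR_add: "RR n A (\<lambda>i j. x i j + y i j) = RR n A x + RR n A y"
  unfolding RR_def by (simp add: distrib_right sum.distrib distrib_left)

lemma RR_diff: "RR n A (\<lambda>i j. x i j - y i j) = RR n A x - RR n A y"
  unfolding RR_def by (simp add: left_diff_distrib sum_subtractf right_diff_distrib)

lemma RR_scale: "RR n A (\<lambda>i j. c * x i j) = c * RR n A x"
  unfolding RR_def by (simp add: sum_distrib_left mult_ac)

lemma AQ: "k < n \<Longrightarrow> A k (p k) * QQ n A p k = (\<Prod>i=0..<n. A i (p i))"
  unfolding QQ_def by (subst prod.remove[of _ k]) auto

lemma RR_row: "RR n A (\<lambda>i j. g i * A i j) = (\<Sum>i=0..<n. g i) * det (mat n n (\<lambda>(i,j). A i j))"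
proof -
  have "RR n A (\<lambda>i j. g i * A i j) = (\<Sum>p\<in>{p. p permutes {0..<n}}. signof p * ((\<Sum>i=0..<n. g i) * (\<Prod>i=0..<n. A i (p i))))"
    unfolding RR_def
    apply (rule sum.cong, simp)
    apply (simp add: mult.assoc AQ sum_distrib_right)
    done
  thus ?thesis by (simp add: det_plain sum_distrib_left mult_ac)
qed

lemma RR_col: "RR n A (\<lambda>i j. h j * A i j) = (\<Sum>j=0..<n. h j) * det (mat n n (\<lambda>(i,j). A i j))"
proof -
  have "RR n A (\<lambda>i j. h j * A i j) = (\<Sum>p\<in>{p. p permutes {0..<n}}. signof p * ((\<Sum>j=0..<n. h j) * (\<Prod>i=0..<n. A i (p i))))"
    unfolding RR_def
  proof (rule sum.cong, simp)
    fix p assume "p \<in> {p. p permutes {0..<n}}"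
    hence pp: "p permutes {0..<n}" by simp
    have "(\<Sum>k = 0..<n. h (p k) * A k (p k) * QQ n A p k) = (\<Sum>k = 0..<n. h (p k)) * (\<Prod>i=0..<n. A i (p i))"
      by (simp add: mult.assoc AQ sum_distrib_right)
    also have "(\<Sum>k = 0..<n. h (p k)) = (\<Sum>j=0..<n. h j)"
      by (rule sum.reindex_bij_betw) (rule permutes_imp_bij[OF pp])
    finally show "signof p * (\<Sum>k = 0..<n. h (p k) * A k (p k) * QQ n A p k) =
         signof p * ((\<Sum>j=0..<n. h j) * (\<Prod>i=0..<n. A i (p i)))" by simp
  qed
  thus ?thesis by (simp add: det_plain sum_distrib_left mult_ac)
qed

lemma RR_COL:
  assumes B: "\<And>i j. j + 1 < n \<Longrightarrow> B i j = A i (j+1)" and n: "n \<ge> 1"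
  shows "RR n A (\<lambda>i j. h j * B i j) = h (n-1) * RR n A B"
proof -
  define D where "D j = det (mat n n (\<lambda>(i,j'). if j' = j then B i j' else A i j'))" for j
  have D0: "D j = 0" if j: "j + 1 < n" for j
    unfolding D_def
    apply (rule det_identical_columns[of _ n j "j+1"])
    using j B by (auto intro!: eq_vecI)
  have "RR n A (\<lambda>i j. h j * B i j) = (\<Sum>j=0..<n. h j * D j)"
    unfolding RR_swap D_def
    by (rule sum.cong, simp) (simp add: det_crep sum_distrib_left mult_ac)
  also have "\<dots> = h (n-1) * D (n-1)"
    apply (subst sum.remove[of _ "n-1"]) using n apply auto[2]
    apply (subst sum.neutral) using D0 apply force
    by simp
  finally have 1: "RR n A (\<lambda>i j. h j * B i j) = h (n-1) * D (n-1)" .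
  have "RR n A B = (\<Sum>j=0..<n. D j)"
    unfolding RR_swap D_def
    by (rule sum.cong, simp) (simp add: det_crep)
  also have "\<dots> = D (n-1)"
    apply (subst sum.remove[of _ "n-1"]) using n apply auto[2]
    apply (subst sum.neutral) using D0 apply force
    by simp
  finally show ?thesis using 1 by simp
qed

lemma inv_fact_m1: "inv_fact (m - 1) = of_int m * inv_fact m"
proof (cases "m > 0")
  case True
  then obtain k where k: "nat m = Suc k" by (metis gr0_implies_Suc zero_less_nat_eq)
  have mk: "m = int k + 1" using k True by linarith
  have "nat (m - 1) = k" using k by linarith
  hence "inv_fact (m - 1) = 1 / fact k" unfolding inv_fact_def using True by simp
  moreover have "inv_fact m = 1 / ((real k + 1) * fact k)" unfolding inv_fact_def using True k
    by (simp add: fact_Suc algebra_simps)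
  moreover have "real_of_int m = real k + 1" using mk by simp
  ultimately show ?thesis by simp
next
  case False
  thus ?thesis unfolding inv_fact_def by auto
qed

theorem lemma4p2:
  fixes n :: nat and a :: "nat \<Rightarrow> int"
  assumes incr: "\<And>i j. 1 \<le> i \<Longrightarrow> i < j \<Longrightarrow> j \<le> n \<Longrightarrow> a i < a j"
    and pos: "\<And>i. 1 \<le> i \<Longrightarrow> i \<le> n \<Longrightarrow> a i > 0"
    and bound: "\<And>i. 1 \<le> i \<Longrightarrow> i \<le> n \<Longrightarrow> a i \<le> 2 * int i - 1"
  shows "(\<Sum>k=1..n. det (mat n n (\<lambda>(i, j).
            inv_fact (a (i+1) - int (j+1)) *
            (if i + 1 \<noteq> k then 1
             else of_int ((a (i+1) - int (j+1)) * (a (i+1) - int (j+1) - 1))))))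
       = of_int (\<Sum>k=1..n. (a k - int k) * (a k - 2 * int n + int k - 1))
         * det (mat n n (\<lambda>(i, j). inv_fact (a (i+1) - int (j+1))))"
proof -
  define A where "A i j = inv_fact (a (i+1) - int (j+1))" for i j
  define B1 where "B1 i j = inv_fact (a (i+1) - int (j+1) - 1)" for i j
  define B2 where "B2 i j = inv_fact (a (i+1) - int (j+1)) * of_int ((a (i+1) - int (j+1)) * (a (i+1) - int (j+1) - 1))" for i j
  define \<alpha> where "\<alpha> i = real_of_int (a (i+1))" for i
  define J where "J j = real (j+1)" for j
  define d where "d = det (mat n n (\<lambda>(i, j). A i j))"
  have B1A: "B1 i j = (\<alpha> i - J j) * A i j" for i j
    unfolding B1_def A_def \<alpha>_def J_def by (subst inv_fact_m1) simp
  have B1s: "j + 1 < n \<Longrightarrow> B1 i j = A i (j+1)" for i j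
    unfolding B1_def A_def by (simp add: algebra_simps)
  have m2: "inv_fact (m - 1 - 1) = of_int m * (of_int m - 1) * inv_fact m" for m
    using inv_fact_m1[of m] inv_fact_m1[of "m-1"] by simp
  have aB1: "\<alpha> i * B1 i j = B2 i j + (real j + 2) * B1 i j" for i j
  proof -
    have "B2 i j = inv_fact (a (i+1) - int (j+1) - 1 - 1)"
      unfolding B2_def by (subst m2) (simp add: mult_ac)
    thus ?thesis unfolding B1_def \<alpha>_def using inv_fact_m1[of "a (i+1) - int (j+1) - 1"]
      by (simp add: algebra_simps)
  qed
  have B2e: "B2 i j = - (\<alpha> i ^ 2 * A i j) + 2 * (\<alpha> i * B1 i j) + J j ^ 2 * A i j - B1 i j" for i j
    unfolding B2_def B1A unfolding A_def \<alpha>_def J_def by (simp add: algebra_simps power2_eq_square)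
  have LHS: "(\<Sum>k=1..n. det (mat n n (\<lambda>(i, j).
            inv_fact (a (i+1) - int (j+1)) *
            (if i + 1 \<noteq> k then 1
             else of_int ((a (i+1) - int (j+1)) * (a (i+1) - int (j+1) - 1))))))
     = RR n A B2"
  proof -
    have "(\<Sum>k=1..n. det (mat n n (\<lambda>(i, j).
            inv_fact (a (i+1) - int (j+1)) *
            (if i + 1 \<noteq> k then 1
             else of_int ((a (i+1) - int (j+1)) * (a (i+1) - int (j+1) - 1))))))
      = (\<Sum>k=0..<n. det (mat n n (\<lambda>(i, j).
            inv_fact (a (i+1) - int (j+1)) *
            (if i + 1 \<noteq> Suc k then 1
             else of_int ((a (i+1) - int (j+1)) * (a (i+1) - int (j+1) - 1))))))"
      by (simp add: sum.atLeast1_atMost_eq atLeast0LessThan)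
    also have "\<dots> = (\<Sum>k=0..<n. det (mat n n (\<lambda>(i,j). if i = k then B2 i j else A i j)))"
      apply (rule sum.cong, simp)
      apply (rule arg_cong[where f=det])
      apply (rule cong[where f="mat n n"], simp)
      by (auto simp: A_def B2_def)
    finally show ?thesis using RR_rows by simp
  qed
  define E where "E = RR n A B1"
  define T where "T = RR n A (\<lambda>i j. \<alpha> i * B1 i j)"
  define S where "S = RR n A B2"
  have E: "E = (\<Sum>i=0..<n. \<alpha> i) * d - (\<Sum>j=0..<n. J j) * d"
  proof -
    have "E = RR n A (\<lambda>i j. \<alpha> i * A i j - J j * A i j)"
      unfolding E_def B1A by (simp add: algebra_simps)
    also have "\<dots> = RR n A (\<lambda>i j. \<alpha> i * A i j) - RR n A (\<lambda>i j. J j * A i j)"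
      by (rule RR_diff)
    finally show ?thesis unfolding d_def RR_row RR_col .
  qed
  have T: "T = S + (real n + 1) * E"
  proof (cases "n = 0")
    case True thus ?thesis unfolding T_def S_def E_def RR_def by simp
  next
    case False
    have "T = RR n A (\<lambda>i j. B2 i j + (real j + 2) * B1 i j)"
      unfolding T_def aB1 ..
    also have "\<dots> = S + RR n A (\<lambda>i j. (real j + 2) * B1 i j)"
      unfolding S_def by (rule RR_add)
    also have "RR n A (\<lambda>i j. (real j + 2) * B1 i j) = (real (n-1) + 2) * E"
      unfolding E_def by (rule RR_COL) (use B1s False in auto)
    finally show ?thesis using False by (simp add: of_nat_diff)
  qed
  have S: "S = - ((\<Sum>i=0..<n. \<alpha> i ^ 2) * d) + 2 * T + (\<Sum>j=0..<n. J j ^ 2) * d - E"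
  proof -
    have "S = RR n A (\<lambda>i j. - (\<alpha> i ^ 2 * A i j) + 2 * (\<alpha> i * B1 i j) + J j ^ 2 * A i j - B1 i j)"
      unfolding S_def B2e ..
    also have "\<dots> = RR n A (\<lambda>i j. - (\<alpha> i ^ 2 * A i j) + 2 * (\<alpha> i * B1 i j) + J j ^ 2 * A i j) - E"
      unfolding E_def by (rule RR_diff)
    also have "RR n A (\<lambda>i j. - (\<alpha> i ^ 2 * A i j) + 2 * (\<alpha> i * B1 i j) + J j ^ 2 * A i j)
       = RR n A (\<lambda>i j. - (\<alpha> i ^ 2 * A i j) + 2 * (\<alpha> i * B1 i j)) + RR n A (\<lambda>i j. J j ^ 2 * A i j)"
      by (rule RR_add)
    also have "RR n A (\<lambda>i j. - (\<alpha> i ^ 2 * A i j) + 2 * (\<alpha> i * B1 i j))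
       = RR n A (\<lambda>i j. - (\<alpha> i ^ 2 * A i j)) + RR n A (\<lambda>i j. 2 * (\<alpha> i * B1 i j))"
      by (rule RR_add)
    also have "RR n A (\<lambda>i j. - (\<alpha> i ^ 2 * A i j)) = RR n A (\<lambda>i j. (-1) * (\<alpha> i ^ 2 * A i j))"
      by simp
    also have "\<dots> = - RR n A (\<lambda>i j. \<alpha> i ^ 2 * A i j)"
      by (subst RR_scale) simp
    also have "RR n A (\<lambda>i j. 2 * (\<alpha> i * B1 i j)) = 2 * T"
      unfolding T_def by (rule RR_scale)
    finally show ?thesis unfolding d_def RR_row RR_col by simp
  qed
  have Sv: "S = ((\<Sum>i=0..<n. \<alpha> i ^ 2) - (2 * real n + 1) * ((\<Sum>i=0..<n. \<alpha> i) - (\<Sum>j=0..<n. J j)) - (\<Sum>j=0..<n. J j ^ 2)) * d"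
    using S T E by (simp add: algebra_simps)
  have sumeq: "(\<Sum>i=0..<n. \<alpha> i ^ 2) - (2 * real n + 1) * ((\<Sum>i=0..<n. \<alpha> i) - (\<Sum>j=0..<n. J j)) - (\<Sum>j=0..<n. J j ^ 2)
     = (\<Sum>k=0..<n. \<alpha> k ^ 2 - (2 * real n + 1) * (\<alpha> k - J k) - J k ^ 2)"
    by (simp add: sum_subtractf sum_distrib_left right_diff_distrib)
  have rhs: "real_of_int (\<Sum>k=1..n. (a k - int k) * (a k - 2 * int n + int k - 1))
     = (\<Sum>k=0..<n. \<alpha> k ^ 2 - (2 * real n + 1) * (\<alpha> k - J k) - J k ^ 2)"
  proof -
    have "(\<Sum>k=1..n. (a k - int k) * (a k - 2 * int n + int k - 1))
       = (\<Sum>k=0..<n. (a (Suc k) - int (Suc k)) * (a (Suc k) - 2 * int n + int (Suc k) - 1))"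
      by (simp add: sum.atLeast1_atMost_eq atLeast0LessThan)
    hence "real_of_int (\<Sum>k=1..n. (a k - int k) * (a k - 2 * int n + int k - 1))
       = (\<Sum>k=0..<n. real_of_int ((a (Suc k) - int (Suc k)) * (a (Suc k) - 2 * int n + int (Suc k) - 1)))"
      by (simp only: of_int_sum)
    also have "\<dots> = (\<Sum>k=0..<n. \<alpha> k ^ 2 - (2 * real n + 1) * (\<alpha> k - J k) - J k ^ 2)"
      by (rule sum.cong, simp) (simp add: \<alpha>_def J_def algebra_simps power2_eq_square)
    finally show ?thesis .
  qed
  show ?thesis unfolding LHS rhs
    using Sv sumeq unfolding S_def d_def A_def by simp
qed

end
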